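(* Let $G$ be the abelian group of sequences $(\alpha_i)_{i\in\mathbb N}\in\{-1,1\}^{\mathbb N}$ which are eventually equal to $1$ (coordinatewise multiplication). Let $G$ act on $c_0$ by $u(g)(\sum_ix_ie_i)=\sum_i\alpha_ix_ie_i$, on $\mathbb R$ trivially ($v(g)=\mathrm{Id}$), and on $c_0\oplus\mathbb R$ by $$\lambda(g)(x,y)=\Big(u(g)x+y\sum_{i:\alpha_i=-1}e_i,\;y\Big),\qquad g=(\alpha_i)_i.$$ Then $\lambda$ is a bounded representation, $0\to c_0\to c_0\oplus\mathbb R\to\mathbb R\to0$ is an exact sequence of $G$-spaces which splits as a sequence of Banach spaces but does not $G$-split. Consequently $\mathrm{Ext}(\mathbb R,c_0)=\{0\}$ while $\mathrm{Ext}_G(\mathbb R,c_0)\neq\{0\}$.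
   Context: $(e_i)$ is the unit vector basis of $c_0$. An exact sequence of $G$-spaces has $G$-equivariant bounded arrows. It $G$-splits if the quotient map admits a bounded linear $G$-equivariant right inverse (equivalently, the sequence is equivalent via a $G$-equivariant isomorphism to the direct sum with diagonal action). $\mathrm{Ext}(Y,X)$ is the set of equivalence classes of exact sequences $0\to X\to Z\to Y\to0$ of Banach spaces; $\mathrm{Ext}_G(Y,X)$ is the set of classes of exact sequences of $G$-spaces (with the given actions on $X$ and $Y$) under $G$-equivariant equivalence; $0$ denotes the class of split (resp. $G$-split) sequences. *)

theory Defs
  imports "HOL-Analysis.Analysis"
begin

text \<open>The ambient Banach space l-infinity = bounded (automatically continuous) functions
  on the discrete space nat with the sup norm; c0 is the closed subspace of null sequences.\<close>

type_synonym linf = "nat \<Rightarrow>\<^sub>C real"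

definition c0 :: "linf set" where
  "c0 = {x. (\<lambda>i. apply_bcontfun x i) \<longlonglongrightarrow> 0}"

definition unit_vec :: "nat \<Rightarrow> linf" where
  "unit_vec i = Bcontfun (\<lambda>j. if j = i then 1 else 0)"

definition Gset :: "(nat \<Rightarrow> int) set" where
  "Gset = {a. (\<forall>i. a i = 1 \<or> a i = -1) \<and> finite {i. a i = -1}}"

definition Gmul :: "(nat \<Rightarrow> int) \<Rightarrow> (nat \<Rightarrow> int) \<Rightarrow> (nat \<Rightarrow> int)" where
  "Gmul g h = (\<lambda>i. g i * h i)"

definition Gone :: "nat \<Rightarrow> int" where
  "Gone = (\<lambda>i. 1)"

definition bounded_op :: "'a::real_normed_vector set \<Rightarrow> 'b::real_normed_vector set \<Rightarrow> ('a \<Rightarrow> 'b) \<Rightarrow> bool" where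
  "bounded_op V W T \<longleftrightarrow>
     (\<forall>x\<in>V. T x \<in> W) \<and>
     (\<forall>x\<in>V. \<forall>y\<in>V. T (x + y) = T x + T y) \<and>
     (\<forall>x\<in>V. \<forall>c. T (c *\<^sub>R x) = c *\<^sub>R T x) \<and>
     (\<exists>K. \<forall>x\<in>V. norm (T x) \<le> K * norm x)"

definition bounded_rep :: "'a::real_normed_vector set \<Rightarrow> ((nat \<Rightarrow> int) \<Rightarrow> 'a \<Rightarrow> 'a) \<Rightarrow> bool" where
  "bounded_rep V \<pi> \<longleftrightarrow>
     (\<forall>g\<in>Gset. bounded_op V V (\<pi> g)) \<and>
     (\<forall>g\<in>Gset. \<forall>h\<in>Gset. \<forall>x\<in>V. \<pi> (Gmul g h) x = \<pi> g (\<pi> h x)) \<and>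
     (\<forall>x\<in>V. \<pi> Gone x = x) \<and>
     (\<exists>K. \<forall>g\<in>Gset. \<forall>x\<in>V. norm (\<pi> g x) \<le> K * norm x)"

definition equivariant :: "'a::real_normed_vector set \<Rightarrow> ((nat \<Rightarrow> int) \<Rightarrow> 'a \<Rightarrow> 'a) \<Rightarrow>
    ((nat \<Rightarrow> int) \<Rightarrow> 'b::real_normed_vector \<Rightarrow> 'b) \<Rightarrow> ('a \<Rightarrow> 'b) \<Rightarrow> bool" where
  "equivariant V \<pi> \<rho> T \<longleftrightarrow> (\<forall>g\<in>Gset. \<forall>x\<in>V. T (\<pi> g x) = \<rho> g (T x))"

definition exact_seq :: "'a::real_normed_vector set \<Rightarrow> 'b::real_normed_vector set \<Rightarrow>
    'c::real_normed_vector set \<Rightarrow> ('a \<Rightarrow> 'b) \<Rightarrow> ('b \<Rightarrow> 'c) \<Rightarrow> bool" where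
  "exact_seq X Z Y i q \<longleftrightarrow>
     bounded_op X Z i \<and> bounded_op Z Y q \<and> inj_on i X \<and> q ` Z = Y \<and>
     i ` X = {z\<in>Z. q z = 0}"

definition G_exact_seq :: "'a::real_normed_vector set \<Rightarrow> 'b::real_normed_vector set \<Rightarrow>
    'c::real_normed_vector set \<Rightarrow>
    ((nat \<Rightarrow> int) \<Rightarrow> 'a \<Rightarrow> 'a) \<Rightarrow> ((nat \<Rightarrow> int) \<Rightarrow> 'b \<Rightarrow> 'b) \<Rightarrow> ((nat \<Rightarrow> int) \<Rightarrow> 'c \<Rightarrow> 'c) \<Rightarrow>
    ('a \<Rightarrow> 'b) \<Rightarrow> ('b \<Rightarrow> 'c) \<Rightarrow> bool" where
  "G_exact_seq X Z Y \<pi>X \<pi>Z \<pi>Y i q \<longleftrightarrow>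
     exact_seq X Z Y i q \<and> bounded_rep X \<pi>X \<and> bounded_rep Z \<pi>Z \<and> bounded_rep Y \<pi>Y \<and>
     equivariant X \<pi>X \<pi>Z i \<and> equivariant Z \<pi>Z \<pi>Y q"

definition splits :: "'b::real_normed_vector set \<Rightarrow> 'c::real_normed_vector set \<Rightarrow> ('b \<Rightarrow> 'c) \<Rightarrow> bool" where
  "splits Z Y q \<longleftrightarrow> (\<exists>s. bounded_op Y Z s \<and> (\<forall>y\<in>Y. q (s y) = y))"

definition G_splits :: "'b::real_normed_vector set \<Rightarrow> 'c::real_normed_vector set \<Rightarrow>
    ((nat \<Rightarrow> int) \<Rightarrow> 'b \<Rightarrow> 'b) \<Rightarrow> ((nat \<Rightarrow> int) \<Rightarrow> 'c \<Rightarrow> 'c) \<Rightarrow> ('b \<Rightarrow> 'c) \<Rightarrow> bool" where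
  "G_splits Z Y \<pi>Z \<pi>Y q \<longleftrightarrow>
     (\<exists>s. bounded_op Y Z s \<and> equivariant Y \<pi>Y \<pi>Z s \<and> (\<forall>y\<in>Y. q (s y) = y))"

definition u_act :: "(nat \<Rightarrow> int) \<Rightarrow> linf \<Rightarrow> linf" where
  "u_act g x = Bcontfun (\<lambda>i. of_int (g i) * apply_bcontfun x i)"

definition v_act :: "(nat \<Rightarrow> int) \<Rightarrow> real \<Rightarrow> real" where
  "v_act g y = y"

definition lam_act :: "(nat \<Rightarrow> int) \<Rightarrow> linf \<times> real \<Rightarrow> linf \<times> real" where
  "lam_act g z = (u_act g (fst z) + snd z *\<^sub>R (\<Sum>i\<in>{i. g i = -1}. unit_vec i), snd z)"

definition incl :: "linf \<Rightarrow> linf \<times> real" where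
  "incl x = (x, 0)"

definition proj :: "linf \<times> real \<Rightarrow> real" where
  "proj z = snd z"

end

theory Submission
  imports Defs
begin

lemma Bc_apply:
  fixes f :: "nat \<Rightarrow> real"
  assumes "\<And>i. \<bar>f i\<bar> \<le> b"
  shows "apply_bcontfun (Bcontfun f) = f"
  by (rule Bcontfun_inverse, rule bcontfun_normI[where b=b]) (auto simp: assms)

lemma Gset_abs: "g \<in> Gset \<Longrightarrow> \<bar>g i\<bar> = 1"
  unfolding Gset_def by (metis (mono_tags, lifting) abs_neg_one abs_one mem_Collect_eq)

lemma Gset_absr: "g \<in> Gset \<Longrightarrow> \<bar>real_of_int (g i)\<bar> = 1"
  using Gset_abs[of g i] by (metis of_int_abs of_int_1)

lemma u_apply:
  assumes "\<forall>i. \<bar>g i\<bar> \<le> 1"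
  shows "apply_bcontfun (u_act g x) i = of_int (g i) * apply_bcontfun x i"
proof -
  have "\<bar>of_int (g j) * apply_bcontfun x j\<bar> \<le> norm x" for j
  proof -
    have "\<bar>real_of_int (g j)\<bar> \<le> 1" using assms by (metis of_int_abs of_int_le_1_iff)
    moreover have "\<bar>apply_bcontfun x j\<bar> \<le> norm x" using norm_bounded[of x j] by simp
    ultimately show ?thesis unfolding abs_mult
      by (metis abs_ge_zero mult_le_one mult.commute mult_left_le norm_ge_zero order_trans mult_right_mono mult_1)
  qed
  then show ?thesis unfolding u_act_def by (subst Bc_apply) auto
qed

lemma Gset_le: "g \<in> Gset \<Longrightarrow> \<forall>i. \<bar>g i\<bar> \<le> 1"
  using Gset_abs by simp

lemma Gmul_le: "g \<in> Gset \<Longrightarrow> h \<in> Gset \<Longrightarrow> \<forall>i. \<bar>Gmul g h i\<bar> \<le> 1"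
  using Gset_abs unfolding Gmul_def by (simp add: abs_mult)

lemma unit_apply: "apply_bcontfun (unit_vec i) j = (if j = i then 1 else 0)"
  unfolding unit_vec_def by (subst Bc_apply[where b=1]) auto

lemma eS_apply: "finite S \<Longrightarrow> apply_bcontfun (sum unit_vec S) j = (if j \<in> S then 1 else 0)"
  by (induction S rule: finite_induct) (auto simp: unit_apply)

lemma eS_norm: "finite S \<Longrightarrow> norm (sum unit_vec S) \<le> 1"
  by (rule norm_bound) (simp add: eS_apply)

lemma c0_zero: "0 \<in> c0" unfolding c0_def by simp
lemma c0_add: "x \<in> c0 \<Longrightarrow> y \<in> c0 \<Longrightarrow> x + y \<in> c0"
  unfolding c0_def using tendsto_add by fastforce
lemma c0_scale: "x \<in> c0 \<Longrightarrow> c *\<^sub>R x \<in> c0"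
  unfolding c0_def using tendsto_mult_right_zero by fastforce

lemma eS_c0: assumes "finite S" shows "sum unit_vec S \<in> c0"
proof -
  obtain k where "S \<subseteq> {..<k}" using assms finite_nat_bounded by blast
  then have "eventually (\<lambda>j. apply_bcontfun (sum unit_vec S) j = 0) sequentially"
    unfolding eventually_sequentially using assms by (auto simp: eS_apply intro!: exI[of _ k])
  then show ?thesis unfolding c0_def by (simp add: tendsto_eventually)
qed

lemma u_c0: assumes "g \<in> Gset" "x \<in> c0" shows "u_act g x \<in> c0"
proof -
  have "(\<lambda>i. \<bar>apply_bcontfun x i\<bar>) \<longlonglongrightarrow> 0" using assms(2) unfolding c0_def
    using tendsto_rabs_zero_iff by blast
  moreover have "\<bar>apply_bcontfun (u_act g x) i\<bar> = \<bar>apply_bcontfun x i\<bar>" for i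
    using u_apply[OF Gset_le[OF assms(1)]] Gset_absr[OF assms(1)] by (simp add: abs_mult)
  ultimately show ?thesis unfolding c0_def using tendsto_rabs_zero_iff by fastforce
qed

lemma u_norm: assumes "g \<in> Gset" shows "norm (u_act g x) \<le> norm x"
proof (rule norm_bound)
  fix i
  show "norm (apply_bcontfun (u_act g x) i) \<le> norm x"
    using u_apply[OF Gset_le[OF assms]] Gset_absr[OF assms] norm_bounded[of x i]
    by (simp add: abs_mult)
qed

lemma u_add: "g \<in> Gset \<Longrightarrow> u_act g (x + y) = u_act g x + u_act g y"
  by (rule bcontfun_eqI) (simp add: u_apply[OF Gset_le] algebra_simps)

lemma u_scale: "g \<in> Gset \<Longrightarrow> u_act g (c *\<^sub>R x) = c *\<^sub>R u_act g x"
  by (rule bcontfun_eqI) (simp add: u_apply[OF Gset_le] algebra_simps)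

lemma u_mul: assumes g: "g \<in> Gset" and h: "h \<in> Gset" shows "u_act (Gmul g h) x = u_act g (u_act h x)"
proof (rule bcontfun_eqI)
  fix i
  have "apply_bcontfun (u_act (Gmul g h) x) i = of_int (Gmul g h i) * apply_bcontfun x i"
    by (rule u_apply[OF Gmul_le[OF g h]])
  then show "apply_bcontfun (u_act (Gmul g h) x) i = apply_bcontfun (u_act g (u_act h x)) i"
    by (simp add: u_apply[OF Gset_le[OF g]] u_apply[OF Gset_le[OF h]] Gmul_def)
qed

lemma Gone_le: "\<forall>i. \<bar>Gone i\<bar> \<le> 1" by (simp add: Gone_def)

lemma u_one: "u_act Gone x = x"
proof (rule bcontfun_eqI)
  fix i
  have "apply_bcontfun (u_act Gone x) i = of_int (Gone i) * apply_bcontfun x i"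
    by (rule u_apply[OF Gone_le])
  then show "apply_bcontfun (u_act Gone x) i = apply_bcontfun x i" by (simp add: Gone_def)
qed

lemma Gfin: "g \<in> Gset \<Longrightarrow> finite {i. g i = -1}" unfolding Gset_def by simp

lemma eS_mul:
  assumes g: "g \<in> Gset" and h: "h \<in> Gset"
  shows "sum unit_vec {i. Gmul g h i = -1} = u_act g (sum unit_vec {i. h i = -1}) + sum unit_vec {i. g i = -1}"
proof -
  have f0: "finite ({i. g i = -1} \<union> {i. h i = -1})" using Gfin[OF g] Gfin[OF h] by simp
  have sub: "{i. Gmul g h i = -1} \<subseteq> {i. g i = -1} \<union> {i. h i = -1}"
       by (use g h in \<open>auto simp: Gmul_def Gset_def\<close>; metis mult.right_neutral)
  have f: "finite {i. Gmul g h i = -1}" using finite_subset[OF sub f0] .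
  have f': "finite {i. g i * h i = -1}" using f unfolding Gmul_def .
  show ?thesis
  proof (rule bcontfun_eqI)
    fix j
    have "g j = 1 \<or> g j = -1" "h j = 1 \<or> h j = -1" using g h unfolding Gset_def by auto
    then show "apply_bcontfun (sum unit_vec {i. Gmul g h i = -1}) j =
      apply_bcontfun (u_act g (sum unit_vec {i. h i = -1}) + sum unit_vec {i. g i = -1}) j"
      by (auto simp: eS_apply[OF f'] eS_apply[OF Gfin[OF g]] eS_apply[OF Gfin[OF h]]
          u_apply[OF Gset_le[OF g]] Gmul_def)
  qed
qed

lemma lam_norm: assumes g: "g \<in> Gset" shows "norm (lam_act g z) \<le> 3 * norm z"
proof -
  obtain x y where z: "z = (x, y)" by fastforce
  have nx: "norm x \<le> norm z" and ny: "\<bar>y\<bar> \<le> norm z"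
    using norm_fst_le[of x y] norm_snd_le[of y x] z by auto
  have e: "norm (sum unit_vec {i. g i = -1}) \<le> 1" using eS_norm[OF Gfin[OF g]] .
  have "norm (u_act g x + y *\<^sub>R sum unit_vec {i. g i = -1}) \<le> norm x + \<bar>y\<bar>"
  proof -
    have "norm (u_act g x + y *\<^sub>R sum unit_vec {i. g i = -1}) \<le> norm (u_act g x) + \<bar>y\<bar> * norm (sum unit_vec {i. g i = -1})"
      using norm_triangle_ineq by (metis norm_scaleR)
    also have "\<dots> \<le> norm x + \<bar>y\<bar>" using u_norm[OF g, of x] e
      by (meson abs_ge_zero add_mono mult_left_le)
    finally show ?thesis .
  qed
  then have "norm (lam_act g z) \<le> norm x + \<bar>y\<bar> + \<bar>y\<bar>"
    unfolding lam_act_def z using norm_Pair_le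
    by (smt (verit) fst_conv real_norm_def snd_conv)
  then show ?thesis using nx ny by linarith
qed

lemma lam_rep: "bounded_rep (c0 \<times> UNIV) lam_act"
  unfolding bounded_rep_def
proof (intro conjI ballI)
  fix g assume g: "g \<in> Gset"
  show "bounded_op (c0 \<times> UNIV) (c0 \<times> UNIV) (lam_act g)"
    unfolding bounded_op_def
  proof (intro conjI ballI allI)
    fix z :: "linf \<times> real" assume "z \<in> c0 \<times> UNIV"
    then show "lam_act g z \<in> c0 \<times> UNIV" unfolding lam_act_def
      by (auto intro!: c0_add c0_scale u_c0 g eS_c0 Gfin)
  next
    fix z w :: "linf \<times> real"
    show "lam_act g (z + w) = lam_act g z + lam_act g w"
      unfolding lam_act_def by (simp add: u_add[OF g] scaleR_add_left algebra_simps)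
  next
    fix z :: "linf \<times> real" and c :: real
    show "lam_act g (c *\<^sub>R z) = c *\<^sub>R lam_act g z"
      unfolding lam_act_def by (simp add: u_scale[OF g] scaleR_add_right)
  next
    show "\<exists>K. \<forall>x\<in>c0 \<times> UNIV. norm (lam_act g x) \<le> K * norm x"
      using lam_norm[OF g] by blast
  qed
next
  fix g h z assume g: "g \<in> Gset" and h: "h \<in> Gset" and "z \<in> (c0 \<times> (UNIV::real set))"
  show "lam_act (Gmul g h) z = lam_act g (lam_act h z)"
    unfolding lam_act_def by (simp add: eS_mul[OF g h] u_mul[OF g h] u_add[OF g] u_scale[OF g] algebra_simps)
next
  fix z :: "linf \<times> real"
  have "{i. Gone i = -1} = {}" by (simp add: Gone_def)
  then show "lam_act Gone z = z" unfolding lam_act_def by (simp add: u_one)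
next
  show "\<exists>K. \<forall>g\<in>Gset. \<forall>x\<in>c0 \<times> UNIV. norm (lam_act g x) \<le> K * norm x"
    using lam_norm by blast
qed

lemma u_rep: "bounded_rep c0 u_act"
  unfolding bounded_rep_def bounded_op_def
  using u_c0 u_add u_scale u_norm u_mul u_one by (auto intro!: exI[of _ 1])

lemma v_rep: "bounded_rep (UNIV::real set) v_act"
  unfolding bounded_rep_def bounded_op_def v_act_def by (auto intro!: exI[of _ 1])

lemma ex_seq: "exact_seq c0 (c0 \<times> UNIV) UNIV incl proj"
  unfolding exact_seq_def bounded_op_def incl_def proj_def
proof (intro conjI)
  show "\<exists>K. \<forall>x\<in>c0. norm (x, 0::real) \<le> K * norm x" by (auto intro!: exI[of _ 1] simp: norm_Pair)
  show "\<exists>K. \<forall>x\<in>c0 \<times> (UNIV::real set). norm (snd x) \<le> K * norm x"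
    by (auto intro!: exI[of _ 1]) (metis norm_snd_le real_norm_def)
  show "snd ` (c0 \<times> UNIV) = (UNIV::real set)" using c0_zero by auto
  show "(\<lambda>x. (x, 0::real)) ` c0 = {z \<in> c0 \<times> UNIV. snd z = 0}" by auto
qed (auto simp: inj_on_def)

lemma G_seq: "G_exact_seq c0 (c0 \<times> UNIV) UNIV u_act lam_act v_act incl proj"
  unfolding G_exact_seq_def equivariant_def
  using ex_seq lam_rep u_rep v_rep
  by (auto simp: incl_def proj_def lam_act_def v_act_def)

lemma no_G_split: "\<not> G_splits (c0 \<times> UNIV) UNIV lam_act v_act proj"
proof
  assume "G_splits (c0 \<times> UNIV) UNIV lam_act v_act proj"
  then obtain s where sb: "bounded_op UNIV (c0 \<times> UNIV) s"
    and eq: "equivariant UNIV v_act lam_act s" and q: "\<forall>y. proj (s y) = y"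
    unfolding G_splits_def by auto
  obtain x y where sx: "s 1 = (x, y)" by fastforce
  have "proj (s 1) = 1" using q by blast
  then have y: "y = 1" using sx unfolding proj_def by simp
  have "s 1 \<in> c0 \<times> UNIV" using sb unfolding bounded_op_def by blast
  then have xc: "x \<in> c0" using sx by simp
  have half: "apply_bcontfun x i = 1/2" for i
  proof -
    define g where "g = Gone(i := -1)"
    have gG: "g \<in> Gset" unfolding g_def Gset_def Gone_def by auto
    have S: "{j. g j = -1} = {i}" unfolding g_def Gone_def by auto
    have gi: "g i = -1" unfolding g_def by simp
    have A: "s 1 = lam_act g (s 1)" using eq gG unfolding equivariant_def v_act_def by auto
    have B: "lam_act g (x, 1) = (u_act g x + unit_vec i, 1)" by (simp add: lam_act_def S)
    have A': "(x, 1) = lam_act g (x, 1)" using A unfolding sx y .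
    have "(x, 1) = (u_act g x + unit_vec i, 1::real)" using A' B by (rule trans)
    then have "fst (x, 1::real) = fst (u_act g x + unit_vec i, 1::real)" by (rule arg_cong)
    then have X: "x = u_act g x + unit_vec i" by (simp only: fst_conv)
    have "apply_bcontfun x i = apply_bcontfun (u_act g x + unit_vec i) i"
      by (rule arg_cong[OF X])
    also have "\<dots> = - apply_bcontfun x i + 1"
      using u_apply[OF Gset_le[OF gG], of x i] by (simp add: unit_apply gi)
    finally show ?thesis by linarith
  qed
  have "(\<lambda>i. apply_bcontfun x i) \<longlonglongrightarrow> 0" using xc unfolding c0_def by simp
  then have "(\<lambda>i. 1/2::real) \<longlonglongrightarrow> 0" using half by simp
  then have "(1/2::real) = 0" by (rule LIMSEQ_const_iff[THEN iffD1])
  then show False by simp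
qed

lemma gen_split:
  fixes i :: "linf \<Rightarrow> 'z::banach" and q :: "'z \<Rightarrow> real"
  assumes "exact_seq c0 UNIV UNIV i q"
  shows "splits UNIV UNIV q"
proof -
  from assms have surj: "q ` UNIV = UNIV" and hom: "\<forall>c x. q (c *\<^sub>R x) = c *\<^sub>R q x"
    unfolding exact_seq_def bounded_op_def by auto
  obtain z0 where z0: "q z0 = 1" using surj by (metis UNIV_I imageE)
  show ?thesis unfolding splits_def bounded_op_def
    by (rule exI[of _ "\<lambda>y. y *\<^sub>R z0"])
       (auto simp: hom z0 algebra_simps intro!: exI[of _ "norm z0"])
qed

theorem mainTheorem18:
  shows "bounded_rep (c0 \<times> UNIV) lam_act \<and>
    G_exact_seq c0 (c0 \<times> UNIV) UNIV u_act lam_act v_act incl proj \<and>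
    splits (c0 \<times> UNIV) UNIV proj \<and>
    \<not> G_splits (c0 \<times> UNIV) UNIV lam_act v_act proj \<and>
    (\<forall>(i :: linf \<Rightarrow> 'z::banach) (q :: 'z \<Rightarrow> real).
        exact_seq c0 UNIV UNIV i q \<longrightarrow> splits UNIV UNIV q) \<and>
    (\<exists>(i :: linf \<Rightarrow> linf \<times> real) (q :: linf \<times> real \<Rightarrow> real) \<pi>.
        G_exact_seq c0 (c0 \<times> UNIV) UNIV u_act \<pi> v_act i q \<and>
        \<not> G_splits (c0 \<times> UNIV) UNIV \<pi> v_act q)"
proof (intro conjI allI impI)
  show "splits (c0 \<times> UNIV) UNIV proj" unfolding splits_def bounded_op_def proj_def
    by (rule exI[of _ "\<lambda>y. (0, y)"]) (auto simp: c0_zero norm_Pair intro!: exI[of _ 1])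
next
  fix i :: "linf \<Rightarrow> 'z" and q :: "'z \<Rightarrow> real"
  assume "exact_seq c0 UNIV UNIV i q"
  then show "splits UNIV UNIV q" by (rule gen_split)
next
  show "\<exists>(i :: linf \<Rightarrow> linf \<times> real) (q :: linf \<times> real \<Rightarrow> real) \<pi>.
        G_exact_seq c0 (c0 \<times> UNIV) UNIV u_act \<pi> v_act i q \<and>
        \<not> G_splits (c0 \<times> UNIV) UNIV \<pi> v_act q"
    using G_seq no_G_split by blast
qed (rule lam_rep G_seq no_G_split)+

end
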